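(* Let $R$ be a Noetherian ring. Then the set $\mathrm{Princ}(R)$ of principal ideals of $R$ is dense in $\mathcal I(R)$ with respect to the constructible topology if and only if $R$ is a principal ideal ring.
   Context: $\mathcal I(R)$ is the set of ideals of $R$ with the Zariski topology having basis of open sets $\mathcal B(x_1,\ldots,x_n):=\{I\in\mathcal I(R)\mid x_1,\ldots,x_n\in I\}$; it is a spectral space. The constructible topology is the coarsest topology in which all open quasi-compact subsets of $\mathcal I(R)$ are clopen. *)

theory Defs
  imports "HOL-Analysis.Abstract_Topology" "HOL-Algebra.Ring_Divisibility"
begin

definition ideals_of :: "('a, 'b) ring_scheme \<Rightarrow> 'a set set" where
  "ideals_of R = {I. ideal I R}"

definition Princ :: "('a, 'b) ring_scheme \<Rightarrow> 'a set set" where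
  "Princ R = {I. principalideal I R}"

definition zariski_basic :: "('a, 'b) ring_scheme \<Rightarrow> 'a set \<Rightarrow> 'a set set" where
  "zariski_basic R F = {I \<in> ideals_of R. F \<subseteq> I}"

definition zariski_top :: "('a, 'b) ring_scheme \<Rightarrow> 'a set topology" where
  "zariski_top R = topology_generated_by
     {zariski_basic R F | F. finite F \<and> F \<subseteq> carrier R}"

text \<open>Constructible topology: the coarsest topology on I(R) in which every
  open quasi-compact subset of the Zariski topology is clopen, i.e. the topology
  generated by these sets and their complements.\<close>
definition constructible_top :: "('a, 'b) ring_scheme \<Rightarrow> 'a set topology" where
  "constructible_top R = topology_generated_by
     (\<Union>{{U, ideals_of R - U} | U. openin (zariski_top R) U \<and> compactin (zariski_top R) U})"

definition principal_ideal_ring :: "('a, 'b) ring_scheme \<Rightarrow> bool" where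
  "principal_ideal_ring R \<longleftrightarrow> cring R \<and> (\<forall>I. ideal I R \<longrightarrow> principalideal I R)"

end

theory Submission
  imports Defs
begin

locale ncr = cring R + noetherian_ring R for R (structure)
begin

lemma principal_iff: "principalideal J R \<longleftrightarrow> (\<exists>i\<in>carrier R. J = PIdl i)"
proof
  assume "principalideal J R"
  then show "\<exists>i\<in>carrier R. J = PIdl i"
    by (metis cgenideal_eq_genideal principalideal.generate)
next
  assume "\<exists>i\<in>carrier R. J = PIdl i"
  then show "principalideal J R" using cgenideal_is_principalideal by blast
qed

lemma one_minus_mult: "u \<in> carrier R \<Longrightarrow> v \<in> carrier R \<Longrightarrow> \<one> \<ominus> u \<otimes> v = (\<one> \<ominus> u) \<oplus> u \<otimes> (\<one> \<ominus> v)"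
  by (simp add: a_minus_def r_distr r_minus a_assoc[symmetric] l_neg) (simp add: a_assoc l_neg)
lemma one_minus_cancel: "u \<in> carrier R \<Longrightarrow> (\<one> \<ominus> u) \<oplus> u = \<one>"
  by (simp add: a_minus_def a_assoc l_neg)
lemma set_add_mem: "h \<in> H \<Longrightarrow> k \<in> K \<Longrightarrow> h \<oplus> k \<in> set_add R H K"
  unfolding set_add_def' by blast
lemma set_add_elim: "y \<in> set_add R H K \<Longrightarrow> \<exists>h\<in>H. \<exists>k\<in>K. y = h \<oplus> k"
  unfolding set_add_def' by blast
lemma ideal_add_closed: assumes "ideal J R" "a \<in> J" "b \<in> J" shows "a \<oplus> b \<in> J"
  using additive_subgroup.a_closed[OF ideal.axioms(1)[OF assms(1)] assms(2,3)] .
lemma ideal_zero_closed: assumes "ideal J R" shows "\<zero> \<in> J"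
  using additive_subgroup.zero_closed[OF ideal.axioms(1)[OF assms(1)]] .

lemma exists_maxnp:
  assumes "ideal I R" "\<not> principalideal I R"
  shows "\<exists>M. ideal M R \<and> I \<subseteq> M \<and> \<not> principalideal M R \<and>
             (\<forall>J. ideal J R \<and> M \<subset> J \<longrightarrow> principalideal J R)"
proof -
  define S where "S = {J. ideal J R \<and> \<not> principalideal J R \<and> I \<subseteq> J}"
  have "\<exists>M\<in>S. \<forall>X\<in>S. M \<subseteq> X \<longrightarrow> X = M"
  proof (rule subset_Zorn)
    fix C assume C: "subset.chain S C"
    show "\<exists>U\<in>S. \<forall>X\<in>C. X \<subseteq> U"
    proof (cases "C = {}")
      case True
      have "I \<in> S" unfolding S_def using assms by blast
      then show ?thesis using True by blast
    next
      case False
      from C have CS: "C \<subseteq> S" and lin: "\<forall>X\<in>C. \<forall>Y\<in>C. X \<subseteq> Y \<or> Y \<subseteq> X"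
        unfolding subset_chain_def by blast+
      have "C \<subseteq> {I. ideal I R}" using CS unfolding S_def by blast
      then have "subset.chain {I. ideal I R} C" unfolding subset_chain_def using lin by blast
      then have UC: "\<Union>C \<in> C" using ideal_chain_is_trivial False by blast
      show ?thesis
      proof (rule bexI[of _ "\<Union>C"])
        show "\<Union>C \<in> S" using UC CS by blast
        show "\<forall>X\<in>C. X \<subseteq> \<Union>C" by blast
      qed
    qed
  qed
  then obtain M where M: "M \<in> S" and Mmax: "\<And>X. X \<in> S \<Longrightarrow> M \<subseteq> X \<Longrightarrow> X = M" by blast
  have "principalideal J R" if J: "ideal J R" "M \<subset> J" for J
  proof (rule ccontr)
    assume np: "\<not> principalideal J R"
    have "I \<subseteq> J" using M J(2) unfolding S_def by blast
    then have "J \<in> S" unfolding S_def using J(1) np by blast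
    then have "J = M" using Mmax J(2) by blast
    then show False using J(2) by blast
  qed
  then show ?thesis using M unfolding S_def by blast
qed

lemma colon_lemma:
  assumes M: "ideal M R" "\<not> principalideal M R"
    "\<forall>J. ideal J R \<and> M \<subset> J \<longrightarrow> principalideal J R"
    and z: "z \<in> carrier R" and sub: "M \<subseteq> PIdl z"
  shows "\<forall>i\<in>M. \<exists>r\<in>M. i = r \<otimes> z"
proof -
  define L where "L = {x\<in>carrier R. z \<otimes> x \<in> M}"
  have L: "ideal L R" unfolding L_def
    using ideal.helper_max_prime[OF M(1) is_cring z] .
  have MsubL: "M \<subseteq> L" unfolding L_def
  proof
    fix m assume m: "m \<in> M"
    then have "m \<in> carrier R" using ideal.Icarr[OF M(1)] by blast
    moreover have "z \<otimes> m \<in> M" using ideal.I_l_closed[OF M(1) m z] .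
    ultimately show "m \<in> {x \<in> carrier R. z \<otimes> x \<in> M}" by blast
  qed
  have "L = M"
  proof (rule ccontr)
    assume "L \<noteq> M"
    then have "principalideal L R" using M(3) L MsubL by blast
    then obtain b where b: "b \<in> carrier R" "L = PIdl b" using principal_iff by blast
    have "M = PIdl (b \<otimes> z)"
    proof
      show "M \<subseteq> PIdl (b \<otimes> z)"
      proof
        fix i assume i: "i \<in> M"
        then obtain r where r: "r \<in> carrier R" "i = r \<otimes> z"
          using sub unfolding cgenideal_def by blast
        then have "r \<in> L" unfolding L_def using i z m_comm by auto
        then obtain s where s: "s \<in> carrier R" "r = s \<otimes> b"
          using b unfolding cgenideal_def by blast
        then have "i = s \<otimes> (b \<otimes> z)" using r b z m_assoc by auto
        then show "i \<in> PIdl (b \<otimes> z)" unfolding cgenideal_def using s by blast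
      qed
    next
      have "b \<in> L" using b cgenideal_self by blast
      then have "b \<otimes> z \<in> M" unfolding L_def using m_comm z by auto
      then show "PIdl (b \<otimes> z) \<subseteq> M" using cgenideal_minimal M(1) by blast
    qed
    then show False using M(2) principal_iff b z by blast
  qed
  show ?thesis
  proof
    fix i assume i: "i \<in> M"
    then obtain r where r: "r \<in> carrier R" "i = r \<otimes> z"
      using sub unfolding cgenideal_def by blast
    then have "r \<in> L" unfolding L_def using i z m_comm by auto
    then show "\<exists>r\<in>M. i = r \<otimes> z" using r \<open>L = M\<close> by blast
  qed
qed

lemma kill_elem:
  assumes M: "ideal M R" "\<not> principalideal M R"
    "\<forall>J. ideal J R \<and> M \<subset> J \<longrightarrow> principalideal J R"
    and x: "x \<in> carrier R" and sub: "M \<subseteq> PIdl x" and i: "i \<in> M"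
  shows "\<exists>u\<in>carrier R. \<one> \<ominus> u \<in> PIdl x \<and> u \<otimes> i = \<zero>"
proof -
  have MC: "M \<subseteq> carrier R" using ideal.Icarr[OF M(1)] by blast
  have "\<forall>j\<in>M. \<exists>r\<in>M. j = r \<otimes> x" by (rule colon_lemma[OF M x sub])
  then have "\<forall>j\<in>M. \<exists>r. r \<in> M \<and> j = r \<otimes> x" by (simp only: Bex_def)
  from bchoice[OF this] obtain g where g0: "\<forall>j\<in>M. g j \<in> M \<and> j = g j \<otimes> x"
    by (elim exE)
  have g: "g j \<in> M \<and> j = g j \<otimes> x" if "j \<in> M" for j using bspec[OF g0 that] .
  have gM: "g j \<in> M" if "j \<in> M" for j using g[OF that] by (rule conjunct1)
  define f where "f n = (g ^^ n) i" for n
  have fM: "f n \<in> M" for n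
  proof (induction n)
    case 0 then show ?case using i by (simp add: f_def)
  next
    case (Suc n) then show ?case using gM by (simp add: f_def)
  qed
  have fSuc: "f (Suc n) = g (f n)" for n by (simp add: f_def)
  have fS: "f n = f (Suc n) \<otimes> x" for n
    unfolding fSuc using g[OF fM[of n]] by (rule conjunct2)
  have fC: "f n \<in> carrier R" for n using fM MC by blast
  have f0: "i = f n \<otimes> x [^] n" for n
  proof (induction n)
    case 0 then show ?case using fC[of 0] by (simp add: f_def)
  next
    case (Suc n)
    have "i = (f (Suc n) \<otimes> x) \<otimes> x [^] n" using Suc.IH fS[of n] by simp
    also have "\<dots> = f (Suc n) \<otimes> x [^] Suc n"
      using fC x by (simp add: m_assoc m_comm[of x "x [^] n"])
    finally show ?case .
  qed
  have step: "PIdl (f n) \<subseteq> PIdl (f (Suc n))" for n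
  proof -
    have "f n = x \<otimes> f (Suc n)" using fS[of n] m_comm[OF fC[of "Suc n"] x] by (rule trans)
    then have "f n \<in> PIdl (f (Suc n))"
      unfolding cgenideal_def using x by blast
    then show ?thesis by (rule cgenideal_minimal[OF cgenideal_ideal[OF fC]])
  qed
  have mono: "m \<le> n \<Longrightarrow> PIdl (f m) \<subseteq> PIdl (f n)" for m n
    using lift_Suc_mono_le[of "\<lambda>n. PIdl (f n)", OF step] by blast
  define C where "C = range (\<lambda>n. PIdl (f n))"
  have "subset.chain {I. ideal I R} C"
    unfolding subset_chain_def
  proof (intro conjI ballI)
    show "C \<subseteq> {I. ideal I R}" unfolding C_def using cgenideal_ideal[OF fC] by auto
  next
    fix X Y assume "X \<in> C" "Y \<in> C"
    then obtain m n where XY: "X = PIdl (f m)" "Y = PIdl (f n)" unfolding C_def by blast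
    show "X \<subseteq> Y \<or> Y \<subseteq> X"
    proof (cases "m \<le> n")
      case True then show ?thesis using mono[OF True] XY by simp
    next
      case False then have "n \<le> m" by simp
      then show ?thesis using mono[of n m] XY by simp
    qed
  qed
  then have "\<Union>C \<in> C" using ideal_chain_is_trivial[of C] C_def by blast
  then obtain N where N: "\<Union>C = PIdl (f N)" unfolding C_def by blast
  have "PIdl (f (Suc N)) \<subseteq> PIdl (f N)" using N C_def by blast
  then have "f (Suc N) \<in> PIdl (f N)" using cgenideal_self fC by blast
  then obtain r where r: "r \<in> carrier R" "f (Suc N) = r \<otimes> f N"
    unfolding cgenideal_def by blast
  define u where "u = \<one> \<ominus> r \<otimes> x"
  have uC: "u \<in> carrier R" using r x by (simp add: u_def)
  have "\<one> \<ominus> u = r \<otimes> x" using r x by (simp add: u_def a_minus_def minus_add a_assoc[symmetric] r_neg)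
  then have u1: "\<one> \<ominus> u \<in> PIdl x" unfolding cgenideal_def using r by blast
  have "f (Suc N) = r \<otimes> f N" by (rule r(2))
  also have "\<dots> = r \<otimes> (f (Suc N) \<otimes> x)" using fS[of N] by simp
  finally have "f (Suc N) = r \<otimes> (f (Suc N) \<otimes> x)" .
  then have u0: "u \<otimes> f (Suc N) = \<zero>" using r x fC[of "Suc N"]
    unfolding u_def by (metis a_minus_def l_distr l_minus l_one m_assoc m_closed m_comm one_closed r_neg add.inv_closed)
  have "u \<otimes> i = (u \<otimes> f (Suc N)) \<otimes> x [^] Suc N"
    using f0[of "Suc N"] uC fC x by (simp add: m_assoc)
  then have "u \<otimes> i = \<zero>" using u0 x by simp
  then show ?thesis using uC u1 by blast
qed

lemma kill_fin:
  assumes M: "ideal M R" "\<not> principalideal M R"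
    "\<forall>J. ideal J R \<and> M \<subset> J \<longrightarrow> principalideal J R"
    and x: "x \<in> carrier R" and sub: "M \<subseteq> PIdl x"
    and A: "finite A" "A \<subseteq> M"
  shows "\<exists>u\<in>carrier R. \<one> \<ominus> u \<in> PIdl x \<and> (\<forall>a\<in>A. u \<otimes> a = \<zero>)"
  using A
proof (induction A rule: finite_induct)
  case empty
  have e: "\<one> \<ominus> \<one> = \<zero>" by (simp add: a_minus_def r_neg)
  have "\<zero> \<in> PIdl x" by (rule ideal_zero_closed[OF cgenideal_ideal[OF x]])
  then have "\<one> \<ominus> \<one> \<in> PIdl x" unfolding e .
  then show ?case using one_closed by blast
next
  case (insert a F)
  have "F \<subseteq> M" using insert.prems by blast
  then obtain u1 where u1: "u1 \<in> carrier R" "\<one> \<ominus> u1 \<in> PIdl x" "\<forall>b\<in>F. u1 \<otimes> b = \<zero>"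
    using insert.IH by blast
  have aM: "a \<in> M" using insert.prems by blast
  obtain u2 where u2: "u2 \<in> carrier R" "\<one> \<ominus> u2 \<in> PIdl x" "u2 \<otimes> a = \<zero>"
    using kill_elem[OF M x sub aM] by blast
  have MC: "M \<subseteq> carrier R" using ideal.Icarr[OF M(1)] by blast
  have PI: "ideal (PIdl x) R" by (rule cgenideal_ideal[OF x])
  have "u1 \<otimes> (\<one> \<ominus> u2) \<in> PIdl x" using ideal.I_l_closed[OF PI u2(2) u1(1)] .
  then have "(\<one> \<ominus> u1) \<oplus> u1 \<otimes> (\<one> \<ominus> u2) \<in> PIdl x" using ideal_add_closed[OF PI u1(2)] by blast
  then have c1: "\<one> \<ominus> u1 \<otimes> u2 \<in> PIdl x" unfolding one_minus_mult[OF u1(1) u2(1)] .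
  have c2: "\<forall>b\<in>insert a F. (u1 \<otimes> u2) \<otimes> b = \<zero>"
  proof
    fix b assume b: "b \<in> insert a F"
    then have bC: "b \<in> carrier R" using insert.prems MC by blast
    show "(u1 \<otimes> u2) \<otimes> b = \<zero>"
    proof (cases "b = a")
      case True
      then have "(u1 \<otimes> u2) \<otimes> b = u1 \<otimes> (u2 \<otimes> a)" using u1(1) u2(1) bC by (simp add: m_assoc)
      then show ?thesis using u2(3) u1(1) by simp
    next
      case False
      then have "b \<in> F" using b by simp
      then have "u1 \<otimes> b = \<zero>" using u1(3) by (rule bspec[rotated])
      moreover have "(u1 \<otimes> u2) \<otimes> b = u2 \<otimes> (u1 \<otimes> b)"
        using u1(1) u2(1) bC by (simp add: m_assoc m_lcomm)
      ultimately show ?thesis using u2(1) by simp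
    qed
  qed
  have "u1 \<otimes> u2 \<in> carrier R" using u1(1) u2(1) by simp
  then show ?case using c1 c2 by blast
qed

lemma maxnp_max:
  assumes M: "ideal M R" "\<not> principalideal M R"
    "\<forall>J. ideal J R \<and> M \<subset> J \<longrightarrow> principalideal J R"
    and J: "ideal J R" "M \<subseteq> J"
  shows "J = M \<or> J = carrier R"
proof (rule ccontr)
  assume nt: "\<not> (J = M \<or> J = carrier R)"
  then have "M \<subset> J" using J(2) by blast
  then have "principalideal J R" using M(3) J(1) by blast
  then obtain x where x: "x \<in> carrier R" "J = PIdl x" using principal_iff by blast
  have one: "\<one> \<notin> J" using ideal.one_imp_carrier[OF J(1)] nt by blast
  obtain A where A: "A \<subseteq> carrier R" "finite A" "M = Idl A" using finetely_gen[OF M(1)] by blast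
  have AM: "A \<subseteq> M" using A(3) genideal_self[OF A(1)] by simp
  have sub: "M \<subseteq> PIdl x" using J(2) x(2) by simp
  obtain u where u: "u \<in> carrier R" "\<one> \<ominus> u \<in> PIdl x" "\<forall>a\<in>A. u \<otimes> a = \<zero>"
    using kill_fin[OF M x(1) sub A(2) AM] by blast
  have uM: "u \<notin> M"
  proof
    assume "u \<in> M"
    then have "u \<in> J" using J(2) by blast
    moreover have "\<one> \<ominus> u \<in> J" using u(2) x(2) by simp
    ultimately have "(\<one> \<ominus> u) \<oplus> u \<in> J" using ideal_add_closed[OF J(1)] by blast
    then show False using one one_minus_cancel[OF u(1)] by simp
  qed
  define Ann where "Ann = {y \<in> carrier R. u \<otimes> y \<in> {\<zero>}}"
  have AnnI: "ideal Ann R" unfolding Ann_def by (rule ideal.helper_max_prime[OF zeroideal is_cring u(1)])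
  have "A \<subseteq> Ann" unfolding Ann_def using A(1) u(3) by blast
  then have "Idl A \<subseteq> Ann" by (rule genideal_minimal[OF AnnI])
  then have Mann: "u \<otimes> m = \<zero>" if "m \<in> M" for m using A(3) that unfolding Ann_def by blast
  define K where "K = set_add R M (PIdl u)"
  have K: "ideal K R" unfolding K_def by (rule add_ideals[OF M(1) cgenideal_ideal[OF u(1)]])
  have MK: "M \<subseteq> K"
  proof
    fix m assume m: "m \<in> M"
    have "m \<oplus> \<zero> \<in> K" unfolding K_def
      by (rule set_add_mem[OF m ideal_zero_closed[OF cgenideal_ideal[OF u(1)]]])
    then show "m \<in> K" using m ideal.Icarr[OF M(1)] by simp
  qed
  have "\<zero> \<oplus> u \<in> K" unfolding K_def
    by (rule set_add_mem[OF ideal_zero_closed[OF M(1)] cgenideal_self[OF u(1)]])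
  then have uK: "u \<in> K" using u(1) by simp
  have "M \<subset> K" using MK uK uM by blast
  then have "principalideal K R" using M(3) K by blast
  then obtain z where z: "z \<in> carrier R" "K = PIdl z" using principal_iff by blast
  have "z \<in> K" using z cgenideal_self by blast
  then obtain a b where ab: "a \<in> M" "b \<in> PIdl u" "z = a \<oplus> b"
    unfolding K_def using set_add_elim by blast
  then obtain s where s: "s \<in> carrier R" "b = s \<otimes> u" unfolding cgenideal_def by blast
  have aC: "a \<in> carrier R" using ab(1) ideal.Icarr[OF M(1)] by blast
  have col: "\<forall>i\<in>M. \<exists>r\<in>M. i = r \<otimes> z" using colon_lemma[OF M z(1)] MK z(2) by blast
  have "M = PIdl a"
  proof
    show "M \<subseteq> PIdl a"
    proof
      fix i assume i: "i \<in> M"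
      then obtain r where r: "r \<in> M" "i = r \<otimes> z" using col by blast
      have rC: "r \<in> carrier R" using r(1) ideal.Icarr[OF M(1)] by blast
      have "r \<otimes> z = r \<otimes> a \<oplus> s \<otimes> (u \<otimes> r)"
        using ab(3) s rC aC u(1) by (simp add: r_distr m_assoc m_comm m_lcomm)
      also have "\<dots> = r \<otimes> a" using Mann[OF r(1)] s rC aC by simp
      finally have "i = r \<otimes> a" using r(2) by simp
      then show "i \<in> PIdl a" unfolding cgenideal_def using rC by blast
    qed
  next
    show "PIdl a \<subseteq> M" by (rule cgenideal_minimal[OF M(1) ab(1)])
  qed
  then show False using M(2) principal_iff aC by blast
qed


end

lemma ncr_intro: "cring R \<Longrightarrow> noetherian_ring R \<Longrightarrow> ncr R"
  unfolding ncr_def by blast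

lemma zgen_up:
  assumes "generate_topology_on {zariski_basic R F | F. finite F \<and> F \<subseteq> carrier R} U"
  shows "U \<subseteq> ideals_of R \<and> (\<forall>J K. J \<in> U \<longrightarrow> ideal K R \<longrightarrow> J \<subseteq> K \<longrightarrow> K \<in> U)"
  using assms
proof (induction rule: generate_topology_on.induct)
  case Empty then show ?case by simp
next
  case (Int a b) then show ?case by blast
next
  case (UN Ks) then show ?case by blast
next
  case (Basis s)
  then obtain F where F: "s = zariski_basic R F" by blast
  show ?case unfolding F zariski_basic_def ideals_of_def by blast
qed

lemma zopen_up:
  assumes "openin (zariski_top R) U"
  shows "U \<subseteq> ideals_of R \<and> (\<forall>J K. J \<in> U \<longrightarrow> ideal K R \<longrightarrow> J \<subseteq> K \<longrightarrow> K \<in> U)"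
  using assms unfolding zariski_top_def openin_topology_generated_by_iff by (rule zgen_up)

lemma ztop_space: "topspace (zariski_top R) = ideals_of R"
proof -
  have "\<Union>{zariski_basic R F | F. finite F \<and> F \<subseteq> carrier R} = ideals_of R"
  proof
    show "\<Union>{zariski_basic R F | F. finite F \<and> F \<subseteq> carrier R} \<subseteq> ideals_of R"
      unfolding zariski_basic_def by blast
    show "ideals_of R \<subseteq> \<Union>{zariski_basic R F | F. finite F \<and> F \<subseteq> carrier R}"
    proof
      fix I assume "I \<in> ideals_of R"
      then have "I \<in> zariski_basic R {}" unfolding zariski_basic_def by blast
      then show "I \<in> \<Union>{zariski_basic R F | F. finite F \<and> F \<subseteq> carrier R}" by blast
    qed
  qed
  then show ?thesis unfolding zariski_top_def topology_generated_by_topspace .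
qed

lemma zbasic_open:
  assumes "finite F" "F \<subseteq> carrier R"
  shows "openin (zariski_top R) (zariski_basic R F)"
  unfolding zariski_top_def openin_topology_generated_by_iff
  by (rule generate_topology_on.Basis) (use assms in blast)

lemma zbasic_compact:
  assumes R: "ring R" and F: "finite F" "F \<subseteq> carrier R"
  shows "compactin (zariski_top R) (zariski_basic R F)"
  unfolding compactin_def
proof (intro conjI allI impI)
  show "zariski_basic R F \<subseteq> topspace (zariski_top R)"
    unfolding ztop_space zariski_basic_def by blast
next
  fix \<U> assume H: "(\<forall>U\<in>\<U>. openin (zariski_top R) U) \<and> zariski_basic R F \<subseteq> \<Union>\<U>"
  have I0: "genideal R F \<in> zariski_basic R F"
    unfolding zariski_basic_def ideals_of_def
    using ring.genideal_ideal[OF R F(2)] ring.genideal_self[OF R F(2)] by blast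
  then obtain U where U: "U \<in> \<U>" "genideal R F \<in> U" using H by blast
  have Uup: "\<forall>J K. J \<in> U \<longrightarrow> ideal K R \<longrightarrow> J \<subseteq> K \<longrightarrow> K \<in> U"
    using zopen_up H U(1) by blast
  have "zariski_basic R F \<subseteq> U"
  proof
    fix K assume "K \<in> zariski_basic R F"
    then have K: "ideal K R" "F \<subseteq> K" unfolding zariski_basic_def ideals_of_def by blast+
    have "genideal R F \<subseteq> K" using ring.genideal_minimal[OF R K] .
    then show "K \<in> U" using Uup U(2) K(1) by blast
  qed
  then show "\<exists>\<F>. finite \<F> \<and> \<F> \<subseteq> \<U> \<and> zariski_basic R F \<subseteq> \<Union>\<F>"
    using U(1) by (intro exI[of _ "{U}"]) blast
qed

lemma ctop_space:
  assumes R: "ring R"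
  shows "topspace (constructible_top R) = ideals_of R"
proof -
  let ?G = "\<Union>{{U, ideals_of R - U} | U. openin (zariski_top R) U \<and> compactin (zariski_top R) U}"
  have "\<Union>?G = ideals_of R"
  proof
    show "\<Union>?G \<subseteq> ideals_of R"
    proof
      fix x assume "x \<in> \<Union>?G"
      then obtain U where U: "openin (zariski_top R) U" "x \<in> U \<or> x \<in> ideals_of R - U" by blast
      have "U \<subseteq> ideals_of R" using zopen_up[OF U(1)] by blast
      then show "x \<in> ideals_of R" using U(2) by blast
    qed
    have e: "zariski_basic R {} = ideals_of R" unfolding zariski_basic_def by blast
    have "openin (zariski_top R) (ideals_of R) \<and> compactin (zariski_top R) (ideals_of R)"
      using zbasic_open[of "{}" R] zbasic_compact[OF R, of "{}"] unfolding e by simp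
    then have "ideals_of R \<in> ?G" by blast
    then show "ideals_of R \<subseteq> \<Union>?G" by blast
  qed
  then show ?thesis unfolding constructible_top_def topology_generated_by_topspace .
qed

lemma c_open:
  assumes "openin (zariski_top R) U" "compactin (zariski_top R) U"
  shows "openin (constructible_top R) U" "openin (constructible_top R) (ideals_of R - U)"
  unfolding constructible_top_def openin_topology_generated_by_iff
  by (rule generate_topology_on.Basis, use assms in blast)+

theorem proposition5p7:
  fixes R :: "('a, 'b) ring_scheme"
  assumes "cring R" and "noetherian_ring R"
  shows "(constructible_top R) closure_of (Princ R) = topspace (constructible_top R)
         \<longleftrightarrow> principal_ideal_ring R"
proof -
  interpret ncr R by (rule ncr_intro[OF assms])
  have top: "topspace (constructible_top R) = ideals_of R" by (rule ctop_space[OF ring_axioms])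
  show ?thesis
  proof
    assume dense: "(constructible_top R) closure_of (Princ R) = topspace (constructible_top R)"
    show "principal_ideal_ring R"
    proof (rule ccontr)
      assume "\<not> principal_ideal_ring R"
      then obtain I where I: "ideal I R" "\<not> principalideal I R"
        unfolding principal_ideal_ring_def using assms(1) by blast
      obtain M where M: "ideal M R" "\<not> principalideal M R"
        "\<forall>J. ideal J R \<and> M \<subset> J \<longrightarrow> principalideal J R"
        using exists_maxnp[OF I] by blast
      obtain A where A: "A \<subseteq> carrier R" "finite A" "M = genideal R A"
        using finetely_gen[OF M(1)] by blast
      define N where "N = zariski_basic R A \<inter> (ideals_of R - zariski_basic R {\<one>\<^bsub>R\<^esub>})"
      have oA: "openin (constructible_top R) (zariski_basic R A)"
        using c_open(1)[OF zbasic_open[OF A(2,1)] zbasic_compact[OF ring_axioms A(2,1)]] .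
      have o1: "openin (constructible_top R) (ideals_of R - zariski_basic R {\<one>\<^bsub>R\<^esub>})"
        using c_open(2)[OF zbasic_open zbasic_compact[OF ring_axioms]] by simp
      have oN: "openin (constructible_top R) N" unfolding N_def using oA o1 by (rule openin_Int)
      have one: "\<one>\<^bsub>R\<^esub> \<notin> M"
      proof
        assume "\<one>\<^bsub>R\<^esub> \<in> M"
        then have "M = carrier R" by (rule ideal.one_imp_carrier[OF M(1)])
        then show False using M(2) onepideal by simp
      qed
      have AM: "A \<subseteq> M" using A(3) genideal_self[OF A(1)] by simp
      have MN: "M \<in> N" unfolding N_def zariski_basic_def ideals_of_def using M(1) AM one by blast
      have "M \<in> (constructible_top R) closure_of (Princ R)" using dense top M(1)
        unfolding ideals_of_def by simp
      then obtain y where y: "y \<in> Princ R" "y \<in> N" using oN MN unfolding in_closure_of by blast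
      have yp: "principalideal y R" using y(1) unfolding Princ_def by blast
      have yi: "ideal y R" "A \<subseteq> y" "\<one>\<^bsub>R\<^esub> \<notin> y"
        using y(2) unfolding N_def zariski_basic_def ideals_of_def by blast+
      have "M \<subseteq> y" unfolding A(3) by (rule genideal_minimal[OF yi(1,2)])
      then have "y = M \<or> y = carrier R" using maxnp_max[OF M yi(1)] by blast
      then show False using yp M(2) yi(3) by blast
    qed
  next
    assume pir: "principal_ideal_ring R"
    have "Princ R = ideals_of R"
    proof
      show "Princ R \<subseteq> ideals_of R" unfolding Princ_def ideals_of_def
        using principalideal.axioms(1) by blast
      show "ideals_of R \<subseteq> Princ R" using pir unfolding Princ_def ideals_of_def principal_ideal_ring_def
        by blast
    qed
    then show "(constructible_top R) closure_of (Princ R) = topspace (constructible_top R)"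
      using top closure_of_topspace[of "constructible_top R"] by simp
  qed
qed

end
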